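(* Let $\mathsf{cvp}$ be any conjunctive variable projection for quantifier-free linear integer arithmetic (with divisibility predicates). Define $\mathsf{tp}$ on transitions $\tau$ and models $\sigma\models\tau$ as follows. Let $x_\delta$ ($x\in\vec x$) be fresh variables, $\tau_{\land\delta}:=\tau\land\bigwedge_{x\in\vec x}x_\delta\doteq x'-x$, $\tau_\delta:=\mathsf{cvp}(\tau_{\land\delta},\ \sigma\uplus[x_\delta/\sigma(x'-x)\mid x\in\vec x],\ \{x_\delta\mid x\in\vec x\})$, and $\tau_{\mathsf{rec}}:=\tau_\delta[x_\delta/x'-x\mid x\in\vec x]$, whose literals are written in the form $t\bowtie0$ with $\bowtie\in\{\le,\ge,<,>,\doteq\}$ or $e\mid t$ with $e\in\mathbb{N}_+$, where $t=\sum_{x\in\vec x}c_x(x'-x)+c$ with $c_x,c\in\mathbb{Z}$. Let $n$ be a fresh variable. Then $\mathsf{tp}(\tau,\sigma)$ is the conjunction of: $n>0$; for each literal $\sum_{x}c_x(x'-x)+c\bowtie0$ of $\tau_{\mathsf{rec}}$, the literal $\sum_x c_x(x'-x)+n\cdot c\bowtie0$; for each literal $e\mid\sum_x c_x(x'-x)+c$ of $\tau_{\mathsf{rec}}$, the literal $e\mid\sum_x c_x(x'-x)+n\cdot c$; and the formulas $\mathsf{cvp}(\tau,\sigma,\vec x)$ and $\mathsf{cvp}(\tau,\sigma,\vec x')$. Then $\mathsf{tp}$ is a transitive projection.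
   Context: The theory is quantifier-free linear integer arithmetic over $\mathbb{Z}$, including divisibility literals $e\mid t$ ($e\in\mathbb{N}_+$, $t$ an integer linear term), with $\sigma\models e\mid t$ iff $\sigma(t)$ is a multiple of $e$. Fix disjoint vectors $\vec x=(x_1,\dots,x_d)$ (pre-variables) and $\vec x'=(x'_1,\dots,x'_d)$ (post-variables); other variables are extra variables. A formula $\tau$ induces a relation $\to_\tau$ on $\mathbb{Z}^d$: $\vec v\to_\tau\vec v'$ iff $\tau[\vec x/\vec v,\vec x'/\vec v']$ is satisfiable. A transition is a conjunction of literals with variables among $\vec x\cup\vec x'$. A valuation is a partial map from variables to $\mathbb{Z}$; $\sigma\models\psi$ means all variables of $\psi$ are in $\mathrm{dom}(\sigma)$ and $\sigma(\psi)$ is true; $\psi$ is consistent with $\sigma$ if $\sigma(\psi)$ is satisfiable. A conjunctive variable projection is a function $\mathsf{cvp}(\tau,\sigma,X)$ (formula, valuation, variable set) such that for all quantifier-free $\tau$, $X$ and $\sigma\models\tau$: (1) $\sigma\models\mathsf{cvp}(\tau,\sigma,X)$; (2) $\mathsf{cvp}(\tau,\sigma,X)\models\tau$; (3) $\{\mathsf{cvp}(\tau,\theta,X)\mid\theta\models\tau\}$ is finite; (4) the variables of $\mathsf{cvp}(\tau,\sigma,X)$ lie in $X\cap\mathcal V(\tau)$; (5) $\mathsf{cvp}(\tau,\sigma,X)$ is a conjunction of literals. A transitive projection is a function $\mathsf{tp}$ mapping (formula, valuation) to a quantifier-free formula such that for every transition $\tau$ and every $\sigma\models\tau$: (1) $\mathsf{tp}(\tau,\sigma)$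 is consistent with $\sigma$; (2) $\{\mathsf{tp}(\tau,\theta)\mid\theta\models\tau\}$ is finite; (3) the relation $\to_{\mathsf{tp}(\tau,\sigma)}$ is transitive. *)

theory Defs
  imports Main
begin

text \<open>Variables: pre-variables Pre i, post-variables Post i (the relevant ones are
  those with i < d), the fresh variables Delta i (for x_delta) and N (for n), and
  further extra variables Ext k.\<close>
datatype var = Pre nat | Post nat | Delta nat | N | Ext nat

datatype tm = Const int | V var | Add tm tm | Mul int tm

datatype rel = Le | Ge | Lt | Gt | Eq

datatype lit = Cmp rel tm | Dvd int tm

datatype fm = TT | FF | Lit lit | And fm fm | Or fm fm

fun tval :: "(var \<Rightarrow> int) \<Rightarrow> tm \<Rightarrow> int" where
  "tval \<rho> (Const c) = c"
| "tval \<rho> (V v) = \<rho> v"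
| "tval \<rho> (Add s t) = tval \<rho> s + tval \<rho> t"
| "tval \<rho> (Mul c t) = c * tval \<rho> t"

fun rval :: "rel \<Rightarrow> int \<Rightarrow> bool" where
  "rval Le k = (k \<le> 0)"
| "rval Ge k = (k \<ge> 0)"
| "rval Lt k = (k < 0)"
| "rval Gt k = (k > 0)"
| "rval Eq k = (k = 0)"

fun lval :: "(var \<Rightarrow> int) \<Rightarrow> lit \<Rightarrow> bool" where
  "lval \<rho> (Cmp r t) = rval r (tval \<rho> t)"
| "lval \<rho> (Dvd e t) = (e dvd tval \<rho> t)"

fun fval :: "(var \<Rightarrow> int) \<Rightarrow> fm \<Rightarrow> bool" where
  "fval \<rho> TT = True"
| "fval \<rho> FF = False"
| "fval \<rho> (Lit l) = lval \<rho> l"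
| "fval \<rho> (And a b) = (fval \<rho> a \<and> fval \<rho> b)"
| "fval \<rho> (Or a b) = (fval \<rho> a \<or> fval \<rho> b)"

fun tvars :: "tm \<Rightarrow> var set" where
  "tvars (Const c) = {}"
| "tvars (V v) = {v}"
| "tvars (Add s t) = tvars s \<union> tvars t"
| "tvars (Mul c t) = tvars t"

fun lvars :: "lit \<Rightarrow> var set" where
  "lvars (Cmp r t) = tvars t"
| "lvars (Dvd e t) = tvars t"

fun fvars :: "fm \<Rightarrow> var set" where
  "fvars TT = {}"
| "fvars FF = {}"
| "fvars (Lit l) = lvars l"
| "fvars (And a b) = fvars a \<union> fvars b"
| "fvars (Or a b) = fvars a \<union> fvars b"

fun wf_lit :: "lit \<Rightarrow> bool" where
  "wf_lit (Cmp r t) = True"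
| "wf_lit (Dvd e t) = (e > 0)"

fun wf_fm :: "fm \<Rightarrow> bool" where
  "wf_fm (Lit l) = wf_lit l"
| "wf_fm (And a b) = (wf_fm a \<and> wf_fm b)"
| "wf_fm (Or a b) = (wf_fm a \<and> wf_fm b)"
| "wf_fm _ = True"

fun conj_lits :: "fm \<Rightarrow> bool" where
  "conj_lits TT = True"
| "conj_lits (Lit l) = wf_lit l"
| "conj_lits (And a b) = (conj_lits a \<and> conj_lits b)"
| "conj_lits _ = False"

type_synonym valuation = "var \<Rightarrow> int option"

definition models :: "valuation \<Rightarrow> fm \<Rightarrow> bool" where
  "models \<sigma> \<psi> \<longleftrightarrow> fvars \<psi> \<subseteq> dom \<sigma> \<and> fval (\<lambda>v. the (\<sigma> v)) \<psi>"

definition consistent :: "valuation \<Rightarrow> fm \<Rightarrow> bool" where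
  "consistent \<sigma> \<psi> \<longleftrightarrow> (\<exists>\<rho>. (\<forall>v\<in>dom \<sigma>. \<sigma> v = Some (\<rho> v)) \<and> fval \<rho> \<psi>)"

text \<open>Projection entailment \<psi> \<Turnstile> \<exists>(vars \<tau> - X). \<tau>: every model of \<psi> agrees on X
  with some model of \<tau>.\<close>
definition proj_entails :: "fm \<Rightarrow> var set \<Rightarrow> fm \<Rightarrow> bool" where
  "proj_entails \<psi> X \<tau> \<longleftrightarrow>
     (\<forall>\<rho>. fval \<rho> \<psi> \<longrightarrow> (\<exists>\<rho>'. (\<forall>v\<in>X. \<rho>' v = \<rho> v) \<and> fval \<rho>' \<tau>))"

definition is_cvp :: "(fm \<Rightarrow> valuation \<Rightarrow> var set \<Rightarrow> fm) \<Rightarrow> bool" where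
  "is_cvp cvp \<longleftrightarrow>
     (\<forall>\<tau> X \<sigma>. wf_fm \<tau> \<and> models \<sigma> \<tau> \<longrightarrow>
        models \<sigma> (cvp \<tau> \<sigma> X)
      \<and> proj_entails (cvp \<tau> \<sigma> X) X \<tau>
      \<and> finite {cvp \<tau> \<theta> X | \<theta>. models \<theta> \<tau>}
      \<and> fvars (cvp \<tau> \<sigma> X) \<subseteq> X \<inter> fvars \<tau>
      \<and> conj_lits (cvp \<tau> \<sigma> X))"

definition pre_vars :: "nat \<Rightarrow> var set" where
  "pre_vars d = {Pre i | i. i < d}"

definition post_vars :: "nat \<Rightarrow> var set" where
  "post_vars d = {Post i | i. i < d}"

definition delta_vars :: "nat \<Rightarrow> var set" where
  "delta_vars d = {Delta i | i. i < d}"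

definition is_transition :: "nat \<Rightarrow> fm \<Rightarrow> bool" where
  "is_transition d \<tau> \<longleftrightarrow> conj_lits \<tau> \<and> fvars \<tau> \<subseteq> pre_vars d \<union> post_vars d"

text \<open>Models of a transition as used in the construction: \<sigma> \<Turnstile> \<tau>, \<sigma> is defined on all
  pre- and post-variables (so that \<sigma>(x' - x) makes sense) and the fresh variables
  x_delta and n are not in the domain of \<sigma>.\<close>
definition trans_model :: "nat \<Rightarrow> valuation \<Rightarrow> fm \<Rightarrow> bool" where
  "trans_model d \<sigma> \<tau> \<longleftrightarrow> models \<sigma> \<tau> \<and> pre_vars d \<union> post_vars d \<subseteq> dom \<sigma>
      \<and> N \<notin> dom \<sigma> \<and> (\<forall>i. Delta i \<notin> dom \<sigma>)"

text \<open>v \<rightarrow>_\<tau> v' (vectors in Z^d as integer lists of length d).\<close>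
definition induced_rel :: "nat \<Rightarrow> fm \<Rightarrow> int list \<Rightarrow> int list \<Rightarrow> bool" where
  "induced_rel d \<tau> v v' \<longleftrightarrow> length v = d \<and> length v' = d \<and>
     (\<exists>\<rho>. (\<forall>i<d. \<rho> (Pre i) = v ! i \<and> \<rho> (Post i) = v' ! i) \<and> fval \<rho> \<tau>)"

definition is_tp :: "nat \<Rightarrow> (fm \<Rightarrow> valuation \<Rightarrow> fm) \<Rightarrow> bool" where
  "is_tp d tp \<longleftrightarrow>
     (\<forall>\<tau> \<sigma>. is_transition d \<tau> \<and> trans_model d \<sigma> \<tau> \<longrightarrow>
        consistent \<sigma> (tp \<tau> \<sigma>)
      \<and> finite {tp \<tau> \<theta> | \<theta>. trans_model d \<theta> \<tau>}
      \<and> transp (induced_rel d (tp \<tau> \<sigma>)))"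

definition minus_tm :: "tm \<Rightarrow> tm \<Rightarrow> tm" where
  "minus_tm s t = Add s (Mul (-1) t)"

definition tau_and_delta :: "nat \<Rightarrow> fm \<Rightarrow> fm" where
  "tau_and_delta d \<tau> =
     foldr (\<lambda>i \<phi>. And \<phi> (Lit (Cmp Eq (minus_tm (V (Delta i)) (minus_tm (V (Post i)) (V (Pre i)))))))
       [0..<d] \<tau>"

definition ext_val :: "nat \<Rightarrow> valuation \<Rightarrow> valuation" where
  "ext_val d \<sigma> = (\<lambda>v. case v of
      Delta i \<Rightarrow> (if i < d then Some (the (\<sigma> (Post i)) - the (\<sigma> (Pre i))) else \<sigma> v)
    | _ \<Rightarrow> \<sigma> v)"

text \<open>Maps a term t = \<Sum> c_x x_delta + c to \<Sum> c_x (x' - x) + n * c, i.e. performs the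
  substitution x_delta := x' - x (giving \<tau>_rec) and replaces the constant c by n * c.
  (The map is linear, so the result is the described term independently of how t is
  written.)\<close>
fun hom_tm :: "tm \<Rightarrow> tm" where
  "hom_tm (Const c) = Mul c (V N)"
| "hom_tm (V (Delta i)) = minus_tm (V (Post i)) (V (Pre i))"
| "hom_tm (V v) = V v"
| "hom_tm (Add s t) = Add (hom_tm s) (hom_tm t)"
| "hom_tm (Mul c t) = Mul c (hom_tm t)"

fun hom_lit :: "lit \<Rightarrow> lit" where
  "hom_lit (Cmp r t) = Cmp r (hom_tm t)"
| "hom_lit (Dvd e t) = Dvd e (hom_tm t)"

fun hom_fm :: "fm \<Rightarrow> fm" where
  "hom_fm (Lit l) = Lit (hom_lit l)"
| "hom_fm (And a b) = And (hom_fm a) (hom_fm b)"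
| "hom_fm (Or a b) = Or (hom_fm a) (hom_fm b)"
| "hom_fm \<phi> = \<phi>"

definition tp_of :: "(fm \<Rightarrow> valuation \<Rightarrow> var set \<Rightarrow> fm) \<Rightarrow> nat \<Rightarrow> fm \<Rightarrow> valuation \<Rightarrow> fm" where
  "tp_of cvp d \<tau> \<sigma> =
     (let \<tau>\<delta> = cvp (tau_and_delta d \<tau>) (ext_val d \<sigma>) (delta_vars d)
      in And (Lit (Cmp Gt (V N)))
           (And (hom_fm \<tau>\<delta>)
             (And (cvp \<tau> \<sigma> (pre_vars d)) (cvp \<tau> \<sigma> (post_vars d)))))"

end

theory Submission
  imports Defs
begin

lemma tval_cong: "(\<forall>v\<in>tvars t. r v = r' v) \<Longrightarrow> tval r t = tval r' t"
  by (induction t) auto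

lemma lval_cong: "(\<forall>v\<in>lvars l. r v = r' v) \<Longrightarrow> lval r l = lval r' l"
  by (cases l) (auto dest: tval_cong)

lemma fval_cong: "(\<forall>v\<in>fvars f. r v = r' v) \<Longrightarrow> fval r f = fval r' f"
  by (induction f) (auto dest: lval_cong)

lemma conj_wf: "conj_lits f \<Longrightarrow> wf_fm f"
  by (induction f) auto

lemma hom_tm_one:
  assumes "tvars t \<subseteq> delta_vars d" "r N = 1"
    "\<forall>i<d. r (Post i) - r (Pre i) = r' (Delta i)"
  shows "tval r (hom_tm t) = tval r' t"
  using assms by (induction t rule: hom_tm.induct) (auto simp: delta_vars_def minus_tm_def)

lemma hom_fm_one:
  assumes "fvars f \<subseteq> delta_vars d" "r N = 1"
    "\<forall>i<d. r (Post i) - r (Pre i) = r' (Delta i)"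
  shows "fval r (hom_fm f) = fval r' f"
  using assms
proof (induction f rule: hom_fm.induct)
  case (1 l)
  then show ?case
  proof (cases l)
    case (Cmp x t)
    then show ?thesis using 1 hom_tm_one[of t d r r'] by auto
  next
    case (Dvd e t)
    then show ?thesis using 1 hom_tm_one[of t d r r'] by auto
  qed
qed auto

lemma hom_tm_add:
  assumes "tvars t \<subseteq> delta_vars d" "r N = r1 N + r2 N"
    "\<forall>i<d. r (Post i) - r (Pre i) = (r1 (Post i) - r1 (Pre i)) + (r2 (Post i) - r2 (Pre i))"
  shows "tval r (hom_tm t) = tval r1 (hom_tm t) + tval r2 (hom_tm t)"
  using assms by (induction t rule: hom_tm.induct)
    (auto simp: delta_vars_def minus_tm_def algebra_simps)

lemma hom_fm_add:
  assumes "conj_lits f" "fvars f \<subseteq> delta_vars d" "r N = r1 N + r2 N"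
    "\<forall>i<d. r (Post i) - r (Pre i) = (r1 (Post i) - r1 (Pre i)) + (r2 (Post i) - r2 (Pre i))"
    "fval r1 (hom_fm f)" "fval r2 (hom_fm f)"
  shows "fval r (hom_fm f)"
  using assms
proof (induction f rule: hom_fm.induct)
  case (1 l)
  then show ?case
  proof (cases l)
    case (Cmp x t)
    have "tval r (hom_tm t) = tval r1 (hom_tm t) + tval r2 (hom_tm t)"
      using 1 Cmp by (intro hom_tm_add[where d=d]) auto
    then show ?thesis using 1 Cmp by (cases x) auto
  next
    case (Dvd e t)
    have "tval r (hom_tm t) = tval r1 (hom_tm t) + tval r2 (hom_tm t)"
      using 1 Dvd by (intro hom_tm_add[where d=d]) auto
    then show ?thesis using 1 Dvd by auto
  qed
qed auto

definition ff :: "nat \<Rightarrow> fm \<Rightarrow> fm" where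
  "ff i \<phi> = And \<phi> (Lit (Cmp Eq (minus_tm (V (Delta i)) (minus_tm (V (Post i)) (V (Pre i))))))"

lemma tad_eq: "tau_and_delta d \<tau> = foldr ff [0..<d] \<tau>"
  unfolding tau_and_delta_def ff_def by simp

lemma foldr_vars: "fvars (foldr ff xs \<tau>) = fvars \<tau> \<union> (\<Union>i\<in>set xs. {Delta i, Post i, Pre i})"
  by (induction xs) (auto simp: ff_def minus_tm_def)

lemma foldr_val: "fval r (foldr ff xs \<tau>) =
   (fval r \<tau> \<and> (\<forall>i\<in>set xs. r (Delta i) = r (Post i) - r (Pre i)))"
  by (induction xs) (auto simp: ff_def minus_tm_def)

lemma foldr_wf: "wf_fm (foldr ff xs \<tau>) = wf_fm \<tau>"
  by (induction xs) (auto simp: ff_def)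

lemma models_ext:
  assumes "is_transition d \<tau>" "trans_model d \<sigma> \<tau>"
  shows "models (ext_val d \<sigma>) (tau_and_delta d \<tau>)"
proof -
  have tv: "fvars \<tau> \<subseteq> pre_vars d \<union> post_vars d" using assms(1) by (simp add: is_transition_def)
  have m: "models \<sigma> \<tau>" and dom: "pre_vars d \<union> post_vars d \<subseteq> dom \<sigma>" and nd: "\<forall>i. Delta i \<notin> dom \<sigma>"
    using assms(2) by (auto simp: trans_model_def)
  have agree: "\<And>v. (\<forall>i. v \<noteq> Delta i) \<Longrightarrow> ext_val d \<sigma> v = \<sigma> v"
    unfolding ext_val_def by (auto split: var.splits)
  have "fvars \<tau> \<subseteq> dom (ext_val d \<sigma>)"
  proof
    fix v assume "v \<in> fvars \<tau>"
    then have "v \<in> dom \<sigma>" "\<forall>i. v \<noteq> Delta i" using m nd by (force simp: models_def)+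
    then show "v \<in> dom (ext_val d \<sigma>)" using agree by auto
  qed
  moreover have "\<And>i. i < d \<Longrightarrow> {Delta i, Post i, Pre i} \<subseteq> dom (ext_val d \<sigma>)"
    using dom agree by (auto simp: ext_val_def pre_vars_def post_vars_def)
  moreover have "fval (\<lambda>v. the (ext_val d \<sigma> v)) \<tau>"
  proof -
    have "fval (\<lambda>v. the (ext_val d \<sigma> v)) \<tau> = fval (\<lambda>v. the (\<sigma> v)) \<tau>"
      apply (rule fval_cong) using tv agree by (force simp: pre_vars_def post_vars_def)
    then show ?thesis using m by (simp add: models_def)
  qed
  moreover have "\<And>i. i < d \<Longrightarrow> the (ext_val d \<sigma> (Delta i)) =
      the (ext_val d \<sigma> (Post i)) - the (ext_val d \<sigma> (Pre i))"
    by (simp add: ext_val_def)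
  ultimately show ?thesis unfolding models_def tad_eq foldr_vars foldr_val
    by (simp add: UN_subset_iff)
qed

theorem theorem2:
  fixes cvp :: "fm \<Rightarrow> valuation \<Rightarrow> var set \<Rightarrow> fm" and d :: nat
  assumes "is_cvp cvp"
  shows "is_tp d (tp_of cvp d)"
  unfolding is_tp_def
proof (intro allI impI conjI)
  fix \<tau> \<sigma> assume a: "is_transition d \<tau> \<and> trans_model d \<sigma> \<tau>"
  have wf: "wf_fm \<tau>" using a conj_wf by (auto simp: is_transition_def)
  have wf2: "wf_fm (tau_and_delta d \<tau>)" using wf by (simp add: tad_eq foldr_wf)
  have tm: "models \<sigma> \<tau>" using a by (simp add: trans_model_def)
  have me: "models (ext_val d \<sigma>) (tau_and_delta d \<tau>)" using a models_ext by blast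
  define td where "td = cvp (tau_and_delta d \<tau>) (ext_val d \<sigma>) (delta_vars d)"
  define cp where "cp = cvp \<tau> \<sigma> (pre_vars d)"
  define cq where "cq = cvp \<tau> \<sigma> (post_vars d)"
  have H1: "models (ext_val d \<sigma>) td" "fvars td \<subseteq> delta_vars d" "conj_lits td"
    using assms[unfolded is_cvp_def, rule_format, OF conjI[OF wf2 me]] unfolding td_def by auto
  have H2: "models \<sigma> cp" "fvars cp \<subseteq> pre_vars d"
    using assms[unfolded is_cvp_def, rule_format, OF conjI[OF wf tm]] unfolding cp_def by auto
  have H3: "models \<sigma> cq" "fvars cq \<subseteq> post_vars d"
    using assms[unfolded is_cvp_def, rule_format, OF conjI[OF wf tm]] unfolding cq_def by auto
  have tpe: "tp_of cvp d \<tau> \<sigma> = And (Lit (Cmp Gt (V N))) (And (hom_fm td) (And cp cq))"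
    unfolding tp_of_def td_def cp_def cq_def by simp
  have nN: "N \<notin> dom \<sigma>" and nD: "\<forall>i. Delta i \<notin> dom \<sigma>"
    and dom: "pre_vars d \<union> post_vars d \<subseteq> dom \<sigma>" using a by (auto simp: trans_model_def)
  show "consistent \<sigma> (tp_of cvp d \<tau> \<sigma>)"
  proof -
    define r where "r = (\<lambda>v. if v = N then 1 else the (ext_val d \<sigma> v))"
    have agree: "\<And>v. (\<forall>i. v \<noteq> Delta i) \<Longrightarrow> ext_val d \<sigma> v = \<sigma> v"
      unfolding ext_val_def by (auto split: var.splits)
    have c1: "\<forall>v\<in>dom \<sigma>. \<sigma> v = Some (r v)"
    proof
      fix v assume "v \<in> dom \<sigma>"
      then have "v \<noteq> N" "\<forall>i. v \<noteq> Delta i" using nN nD by auto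
      then show "\<sigma> v = Some (r v)" using \<open>v \<in> dom \<sigma>\<close> agree unfolding r_def by auto
    qed
    have "fval r td = fval (\<lambda>v. the (ext_val d \<sigma> v)) td"
      apply (rule fval_cong) using H1(2) by (auto simp: r_def delta_vars_def)
    then have "fval r td" using H1(1) by (simp add: models_def)
    moreover have "\<forall>i<d. r (Post i) - r (Pre i) = r (Delta i)"
      using dom by (auto simp: r_def ext_val_def)
    ultimately have h: "fval r (hom_fm td)" using hom_fm_one[OF H1(2), of r r] by (auto simp: r_def)
    have "fval r cp = fval (\<lambda>v. the (\<sigma> v)) cp"
      apply (rule fval_cong) using H2(2) agree by (auto simp: r_def pre_vars_def)
    then have p: "fval r cp" using H2(1) by (simp add: models_def)
    have "fval r cq = fval (\<lambda>v. the (\<sigma> v)) cq"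
      apply (rule fval_cong) using H3(2) agree by (auto simp: r_def post_vars_def)
    then have q: "fval r cq" using H3(1) by (simp add: models_def)
    show ?thesis unfolding consistent_def tpe
      by (rule exI[of _ r]) (use c1 h p q in \<open>simp add: r_def\<close>)
  qed
  show "finite {tp_of cvp d \<tau> \<theta> | \<theta>. trans_model d \<theta> \<tau>}"
  proof -
    define A where "A = {cvp (tau_and_delta d \<tau>) \<theta> (delta_vars d) | \<theta>. models \<theta> (tau_and_delta d \<tau>)}"
    define B where "B = {cvp \<tau> \<theta> (pre_vars d) | \<theta>. models \<theta> \<tau>}"
    define C where "C = {cvp \<tau> \<theta> (post_vars d) | \<theta>. models \<theta> \<tau>}"
    have fA: "finite A" using assms[unfolded is_cvp_def, rule_format, OF conjI[OF wf2 me]] A_def by auto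
    have fB: "finite B" using assms[unfolded is_cvp_def, rule_format, OF conjI[OF wf tm]] B_def by auto
    have fC: "finite C" using assms[unfolded is_cvp_def, rule_format, OF conjI[OF wf tm]] C_def by auto
    have "{tp_of cvp d \<tau> \<theta> | \<theta>. trans_model d \<theta> \<tau>} \<subseteq>
       (\<lambda>(x, y, z). And (Lit (Cmp Gt (V N))) (And (hom_fm x) (And y z))) ` (A \<times> B \<times> C)"
    proof
      fix f assume "f \<in> {tp_of cvp d \<tau> \<theta> | \<theta>. trans_model d \<theta> \<tau>}"
      then obtain \<theta> where th: "trans_model d \<theta> \<tau>" "f = tp_of cvp d \<tau> \<theta>" by auto
      have "models (ext_val d \<theta>) (tau_and_delta d \<tau>)" using a th models_ext by blast
      moreover have "models \<theta> \<tau>" using th by (simp add: trans_model_def)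
      ultimately show "f \<in> (\<lambda>(x, y, z). And (Lit (Cmp Gt (V N))) (And (hom_fm x) (And y z))) ` (A \<times> B \<times> C)"
        unfolding th(2) tp_of_def A_def B_def C_def Let_def
        by (intro image_eqI[where x="(cvp (tau_and_delta d \<tau>) (ext_val d \<theta>) (delta_vars d),
              cvp \<tau> \<theta> (pre_vars d), cvp \<tau> \<theta> (post_vars d))"]) auto
    qed
    then show ?thesis using fA fB fC finite_subset by blast
  qed
  show "transp (induced_rel d (tp_of cvp d \<tau> \<sigma>))"
  proof (rule transpI)
    fix u v w assume uv: "induced_rel d (tp_of cvp d \<tau> \<sigma>) u v"
      and vw: "induced_rel d (tp_of cvp d \<tau> \<sigma>) v w"
    obtain r1 where r1: "\<forall>i<d. r1 (Pre i) = u ! i \<and> r1 (Post i) = v ! i"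
      "fval r1 (tp_of cvp d \<tau> \<sigma>)" using uv by (auto simp: induced_rel_def)
    obtain r2 where r2: "\<forall>i<d. r2 (Pre i) = v ! i \<and> r2 (Post i) = w ! i"
      "fval r2 (tp_of cvp d \<tau> \<sigma>)" using vw by (auto simp: induced_rel_def)
    define r where "r = (\<lambda>x. case x of Pre i \<Rightarrow> r1 (Pre i) | Post i \<Rightarrow> r2 (Post i)
       | N \<Rightarrow> r1 N + r2 N | _ \<Rightarrow> 0)"
    have h: "fval r (hom_fm td)"
      apply (rule hom_fm_add[OF H1(3) H1(2), of r r1 r2])
      using r1 r2 by (auto simp: r_def tpe)
    have p: "fval r cp = fval r1 cp"
      apply (rule fval_cong) using H2(2) by (auto simp: r_def pre_vars_def)
    have q: "fval r cq = fval r2 cq"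
      apply (rule fval_cong) using H3(2) by (auto simp: r_def post_vars_def)
    have e: "\<forall>i<d. r (Pre i) = u ! i \<and> r (Post i) = w ! i"
      using r1 r2 by (auto simp: r_def)
    have n: "r N > 0" using r1(2) r2(2) by (simp add: r_def tpe)
    have "fval r (tp_of cvp d \<tau> \<sigma>)" using h p q n r1(2) r2(2) by (simp add: tpe)
    then show "induced_rel d (tp_of cvp d \<tau> \<sigma>) u w"
      using uv vw e unfolding induced_rel_def by blast
  qed
qed

end
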